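(* For every linkage $\mathcal L$, $$\mathrm{NCConf}_0(\mathcal L)=\bigcap_{n=1}^\infty \overline{\mathrm{Annot}_{\mathcal L}(\mathrm{NConf}_{1/n}(\mathcal L))},$$ where the bar denotes topological closure in $(\mathbb R^2)^V\times\mathbb R^{E\times E}$. In particular, replacing $1$ by any $\epsilon>0$ in the definition of $\mathrm{NCConf}_0(\mathcal L)$ gives the same set.
   Context: A linkage is a pair $\mathcal L=(G,\ell)$ with $G=(V,E)$ a finite graph and $\ell:E\to\mathbb R_{\ge0}$ (edges are bars; zero lengths allowed). A configuration is a map $C:V\to\mathbb R^2$ with $|C(v)-C(w)|=\ell(v,w)$ for every bar; $\mathrm{Conf}_0(\mathcal L)$ is the set of configurations. Two linkages $(G_1,\ell_1),(G_2,\ell_2)$ are $\epsilon$-related if $G_1=G_2$ and $|\ell_1(e)-\ell_2(e)|\le\epsilon$ for all $e$. A configuration $C$ of a linkage $\mathcal L'=(G,\ell')$ is nontouching if no two bars intersect except at endpoints, and two vertices have the same position iff they are joined in $G$ by a path of bars of $\ell'$-length zero (such vertices are regarded as merged). $\mathrm{NConf}_\epsilon(\mathcal L)$ is the set of nontouching configurations of linkages $\epsilon$-related to $\mathcal L$. Order function: for oriented segments $e_1,e_2$, in coordinates where $e_1$ runs from $(0,0)$ to $(l,0)$, let $d_\pm(e_1,e_2)=\mathrm{len}\{x\in[0,l]:\exists y,\ \pm y\ge0,\ (x,y)\in e_2\}$ and $\mathrm{Ord}(e_1,e_2)=d_+-d_-$. Edges carry fixed canonical orientations; $\mathrm{Annot}_{\mathcal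 L}(C)=(C,A)$ with $A_{i,j}=\mathrm{Ord}(C(e_i),C(e_j))$. The space of noncrossing configurations is $\mathrm{NCConf}_0(\mathcal L)=\big(\mathrm{Conf}_0(\mathcal L)\times\mathbb R^{E\times E}\big)\cap\overline{\mathrm{Annot}_{\mathcal L}(\mathrm{NConf}_1(\mathcal L))}$, i.e. the set of limits, lying in $\mathrm{Conf}_0(\mathcal L)\times\mathbb R^{E\times E}$, of sequences of annotated nontouching configurations of linkages $1$-related to $\mathcal L$. *)

theory Defs
  imports "HOL-Analysis.Analysis"
begin

text \<open>A linkage: vertices are the elements of a finite type 'v; the bars form a set E
  of canonically oriented pairs (a,b) of distinct vertices (each bar stored once);
  the length function l is only relevant on E.\<close>

definition linkage :: "('v \<times> 'v) set \<Rightarrow> ('v \<times> 'v \<Rightarrow> real) \<Rightarrow> bool" where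
  "linkage E l \<longleftrightarrow> (\<forall>(a,b)\<in>E. a \<noteq> b \<and> (b,a) \<notin> E) \<and> (\<forall>e\<in>E. l e \<ge> 0)"

definition is_config :: "('v \<times> 'v) set \<Rightarrow> ('v \<times> 'v \<Rightarrow> real) \<Rightarrow> ('v \<Rightarrow> real^2) \<Rightarrow> bool" where
  "is_config E l C \<longleftrightarrow> (\<forall>(a,b)\<in>E. dist (C a) (C b) = l (a,b))"

definition eps_related :: "('v \<times> 'v) set \<Rightarrow> ('v \<times> 'v \<Rightarrow> real) \<Rightarrow> ('v \<times> 'v \<Rightarrow> real) \<Rightarrow> real \<Rightarrow> bool" where
  "eps_related E l1 l2 \<epsilon> \<longleftrightarrow> (\<forall>e\<in>E. \<bar>l1 e - l2 e\<bar> \<le> \<epsilon>)"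

definition zero_bars :: "('v \<times> 'v) set \<Rightarrow> ('v \<times> 'v \<Rightarrow> real) \<Rightarrow> ('v \<times> 'v) set" where
  "zero_bars E l = {e \<in> E. l e = 0}"

definition merged :: "('v \<times> 'v) set \<Rightarrow> ('v \<times> 'v \<Rightarrow> real) \<Rightarrow> 'v \<Rightarrow> 'v \<Rightarrow> bool" where
  "merged E l u v \<longleftrightarrow> (u, v) \<in> (zero_bars E l \<union> (zero_bars E l)\<inverse>)\<^sup>*"

definition bar :: "('v \<Rightarrow> real^2) \<Rightarrow> 'v \<times> 'v \<Rightarrow> (real^2) set" where
  "bar C e = closed_segment (C (fst e)) (C (snd e))"

definition nontouching :: "('v \<times> 'v) set \<Rightarrow> ('v \<times> 'v \<Rightarrow> real) \<Rightarrow> ('v \<Rightarrow> real^2) \<Rightarrow> bool" where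
  "nontouching E l C \<longleftrightarrow> is_config E l C
     \<and> (\<forall>e\<in>E. \<forall>f\<in>E. e \<noteq> f \<longrightarrow>
          bar C e \<inter> bar C f \<subseteq> {C (fst e), C (snd e)} \<inter> {C (fst f), C (snd f)})
     \<and> (\<forall>u v. C u = C v \<longleftrightarrow> merged E l u v)"

definition NConf :: "('v \<times> 'v) set \<Rightarrow> ('v \<times> 'v \<Rightarrow> real) \<Rightarrow> real \<Rightarrow> ('v \<Rightarrow> real^2) set" where
  "NConf E l \<epsilon> = {C. \<exists>l'. (\<forall>e\<in>E. l' e \<ge> 0) \<and> eps_related E l l' \<epsilon> \<and> nontouching E l' C}"

definition rot90 :: "real^2 \<Rightarrow> real^2" where
  "rot90 u = (\<chi> i. if i = 1 then - (u $ 2) else u $ 1)"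

text \<open>d_s(e1,e2) for s = 1 (d_+) and s = -1 (d_-), with e1 from p to q and e2 the
  segment from a to b; coordinates: x = (z-p).u, y = (z-p).rot90 u, u = sgn(q-p).\<close>
definition d_side :: "real \<Rightarrow> real^2 \<Rightarrow> real^2 \<Rightarrow> real^2 \<Rightarrow> real^2 \<Rightarrow> real" where
  "d_side s p q a b =
     measure lebesgue {x \<in> {0 .. dist p q}. \<exists>z \<in> closed_segment a b.
        x = (z - p) \<bullet> sgn (q - p) \<and> s * ((z - p) \<bullet> rot90 (sgn (q - p))) \<ge> 0}"

definition Ord :: "real^2 \<Rightarrow> real^2 \<Rightarrow> real^2 \<Rightarrow> real^2 \<Rightarrow> real" where
  "Ord p q a b = d_side 1 p q a b - d_side (-1) p q a b"

text \<open>R^(E x E) is represented by functions vanishing outside E x E.\<close>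
definition Annot :: "('v \<times> 'v) set \<Rightarrow> ('v \<Rightarrow> real^2)
    \<Rightarrow> ('v \<Rightarrow> real^2) \<times> ('v \<times> 'v \<Rightarrow> 'v \<times> 'v \<Rightarrow> real)" where
  "Annot E C = (C, \<lambda>i j. if i \<in> E \<and> j \<in> E
       then Ord (C (fst i)) (C (snd i)) (C (fst j)) (C (snd j)) else 0)"

definition NCConf0 :: "('v \<times> 'v) set \<Rightarrow> ('v \<times> 'v \<Rightarrow> real)
    \<Rightarrow> (('v \<Rightarrow> real^2) \<times> ('v \<times> 'v \<Rightarrow> 'v \<times> 'v \<Rightarrow> real)) set" where
  "NCConf0 E l = ({C. is_config E l C} \<times> UNIV) \<inter> closure (Annot E ` NConf E l 1)"

end

theory Submission
  imports Defs
begin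

lemma cont_coord:
  "continuous_on UNIV (\<lambda>x::('v \<Rightarrow> real^2) \<times> 'b::topological_space. fst x a)"
proof -
  have "continuous_on UNIV ((\<lambda>C::'v \<Rightarrow> real^2. C a) \<circ> fst)"
    by (rule continuous_on_compose) (auto intro: continuous_intros)
  then show ?thesis by (simp add: o_def)
qed

lemma cont_g:
  "continuous_on UNIV (\<lambda>x::('v \<Rightarrow> real^2) \<times> 'b::topological_space.
      \<bar>dist (fst x a) (fst x b) - c\<bar>)"
  by (intro continuous_intros cont_coord)

definition gdev :: "('v \<times> 'v) \<Rightarrow> real \<Rightarrow> ('v \<Rightarrow> real^2) \<times> 'b::topological_space \<Rightarrow> real" where
  "gdev e c x = \<bar>dist (fst x (fst e)) (fst x (snd e)) - c\<bar>"

lemma NConf_dev: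
  assumes "C \<in> NConf E l \<epsilon>" "e \<in> E"
  shows "gdev e (l e) (Annot E C) \<le> \<epsilon>"
proof -
  from assms obtain l' where l': "eps_related E l l' \<epsilon>" "nontouching E l' C"
    unfolding NConf_def by blast
  obtain a b where ab: "e = (a,b)" by (cases e)
  have "dist (C a) (C b) = l' e" using l'(2) assms(2) ab
    unfolding nontouching_def is_config_def by auto
  moreover have "\<bar>l e - l' e\<bar> \<le> \<epsilon>" using l'(1) assms(2) unfolding eps_related_def by auto
  ultimately show ?thesis unfolding gdev_def Annot_def ab by auto
qed

lemma key:
  fixes x :: "('v \<Rightarrow> real^2) \<times> ('v \<times> 'v \<Rightarrow> 'v \<times> 'v \<Rightarrow> real)"
  assumes "x \<in> closure (Annot E ` NConf E l \<epsilon>)" "is_config E l (fst x)" "\<delta> > 0"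
    "finite E"
  shows "x \<in> closure (Annot E ` NConf E l \<delta>)"
proof -
  define U :: "(('v \<Rightarrow> real^2) \<times> ('v \<times> 'v \<Rightarrow> 'v \<times> 'v \<Rightarrow> real)) set"
    where "U = (\<Inter>e\<in>E. {y. gdev e (l e) y < \<delta>})"
  have oU: "open U" unfolding U_def gdev_def
    by (intro open_INT assms(4) ballI open_Collect_less cont_g continuous_on_const)
  have xU: "x \<in> U" using assms(2,3) unfolding U_def gdev_def is_config_def by auto
  have sub: "U \<inter> Annot E ` NConf E l \<epsilon> \<subseteq> Annot E ` NConf E l \<delta>"
  proof
    fix y assume "y \<in> U \<inter> Annot E ` NConf E l \<epsilon>"
    then obtain C where C: "C \<in> NConf E l \<epsilon>" "y = Annot E C" and yU: "y \<in> U" by auto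
    from C obtain l' where l': "\<forall>e\<in>E. l' e \<ge> 0" "nontouching E l' C"
      unfolding NConf_def by blast
    have "eps_related E l l' \<delta>" unfolding eps_related_def
    proof
      fix e assume e: "e \<in> E"
      obtain a b where ab: "e = (a,b)" by (cases e)
      have "dist (C a) (C b) = l' e" using l'(2) e ab
        unfolding nontouching_def is_config_def by auto
      moreover have "gdev e (l e) y < \<delta>" using yU e unfolding U_def by auto
      ultimately show "\<bar>l e - l' e\<bar> \<le> \<delta>" using C(2) unfolding gdev_def Annot_def ab by auto
    qed
    then have "C \<in> NConf E l \<delta>" using l' unfolding NConf_def by blast
    then show "y \<in> Annot E ` NConf E l \<delta>" using C by auto
  qed
  have "x \<in> U \<inter> closure (Annot E ` NConf E l \<epsilon>)" using xU assms(1) by auto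
  also have "\<dots> \<subseteq> closure (U \<inter> Annot E ` NConf E l \<epsilon>)" by (rule open_Int_closure_subset[OF oU])
  also have "\<dots> \<subseteq> closure (Annot E ` NConf E l \<delta>)" by (rule closure_mono[OF sub])
  finally show ?thesis .
qed

lemma closure_dev:
  assumes "x \<in> closure (Annot E ` NConf E l \<epsilon>)" "e \<in> E"
  shows "gdev e (l e) x \<le> \<epsilon>"
proof -
  have cl: "closed {y. gdev e (l e) y \<le> \<epsilon>}" unfolding gdev_def
    by (intro closed_Collect_le cont_g continuous_on_const)
  have "Annot E ` NConf E l \<epsilon> \<subseteq> {y. gdev e (l e) y \<le> \<epsilon>}"
  proof (rule subsetI)
    fix y assume "y \<in> Annot E ` NConf E l \<epsilon>"
    then obtain C where C: "C \<in> NConf E l \<epsilon>" "y = Annot E C" by blast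
    show "y \<in> {y. gdev e (l e) y \<le> \<epsilon>}" using NConf_dev[OF C(1) assms(2)] C(2) by simp
  qed
  then have "closure (Annot E ` NConf E l \<epsilon>) \<subseteq> {y. gdev e (l e) y \<le> \<epsilon>}"
    by (rule closure_minimal[OF _ cl])
  then show ?thesis using assms(1) by auto
qed

lemma small_zero:
  fixes d :: real
  assumes "\<And>n::nat. n \<ge> 1 \<Longrightarrow> d \<le> 1 / real n" "d \<ge> 0"
  shows "d = 0"
proof (rule ccontr)
  assume "d \<noteq> 0"
  with assms(2) have dpos: "d > 0" by linarith
  from reals_Archimedean[OF dpos] obtain n :: nat where n: "inverse (real (Suc n)) < d" ..
  have "d \<le> 1 / real (Suc n)" by (rule assms(1)) simp
  with n show False by (simp add: inverse_eq_divide)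
qed

theorem mainTheorem3:
  fixes E :: "('v::finite \<times> 'v) set" and l :: "'v \<times> 'v \<Rightarrow> real"
  assumes "linkage E l"
  shows "NCConf0 E l = (\<Inter>n\<in>{1::nat..}. closure (Annot E ` NConf E l (1 / real n)))
    \<and> (\<forall>\<epsilon>>0. ({C. is_config E l C} \<times> UNIV) \<inter> closure (Annot E ` NConf E l \<epsilon>) = NCConf0 E l)"
proof
  have fin: "finite E" by simp
  show "NCConf0 E l = (\<Inter>n\<in>{1::nat..}. closure (Annot E ` NConf E l (1 / real n)))"
  proof
    show "NCConf0 E l \<subseteq> (\<Inter>n\<in>{1::nat..}. closure (Annot E ` NConf E l (1 / real n)))"
    proof
      fix x assume x: "x \<in> NCConf0 E l"
      have "is_config E l (fst x)" using x unfolding NCConf0_def by auto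
      moreover have "x \<in> closure (Annot E ` NConf E l 1)" using x unfolding NCConf0_def by blast
      ultimately show "x \<in> (\<Inter>n\<in>{1::nat..}. closure (Annot E ` NConf E l (1 / real n)))"
        using key[OF _ _ _ fin] by simp
    qed
  next
    show "(\<Inter>n\<in>{1::nat..}. closure (Annot E ` NConf E l (1 / real n))) \<subseteq> NCConf0 E l"
    proof
      fix x assume x: "x \<in> (\<Inter>n\<in>{1::nat..}. closure (Annot E ` NConf E l (1 / real n)))"
      have "x \<in> closure (Annot E ` NConf E l (1 / real (1::nat)))"
        using x by blast
      then have c1: "x \<in> closure (Annot E ` NConf E l 1)" by simp
      have "is_config E l (fst x)" unfolding is_config_def
      proof (intro ballI, clarify)
        fix a b assume ab: "(a,b) \<in> E"
        have "gdev (a,b) (l (a,b)) x = 0"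
          by (rule small_zero) (use closure_dev[OF _ ab] x in \<open>auto simp: gdev_def\<close>)
        then show "dist (fst x a) (fst x b) = l (a,b)" by (simp add: gdev_def)
      qed
      then show "x \<in> NCConf0 E l" using c1 unfolding NCConf0_def
        by (cases x) auto
    qed
  qed
  show "\<forall>\<epsilon>>0. ({C. is_config E l C} \<times> UNIV) \<inter> closure (Annot E ` NConf E l \<epsilon>) = NCConf0 E l"
  proof (intro allI impI)
    fix \<epsilon> :: real assume e: "\<epsilon> > 0"
    show "({C. is_config E l C} \<times> UNIV) \<inter> closure (Annot E ` NConf E l \<epsilon>) = NCConf0 E l"
    proof
      show "({C. is_config E l C} \<times> UNIV) \<inter> closure (Annot E ` NConf E l \<epsilon>) \<subseteq> NCConf0 E l"
      proof
        fix x assume "x \<in> ({C. is_config E l C} \<times> UNIV) \<inter> closure (Annot E ` NConf E l \<epsilon>)"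
        then have a: "is_config E l (fst x)" "x \<in> closure (Annot E ` NConf E l \<epsilon>)" by auto
        have "x \<in> closure (Annot E ` NConf E l 1)" by (rule key[OF a(2) a(1) _ fin]) simp
        then show "x \<in> NCConf0 E l" using a(1) unfolding NCConf0_def by (cases x) auto
      qed
      show "NCConf0 E l \<subseteq> ({C. is_config E l C} \<times> UNIV) \<inter> closure (Annot E ` NConf E l \<epsilon>)"
      proof
        fix x assume "x \<in> NCConf0 E l"
        then have a: "is_config E l (fst x)" "x \<in> closure (Annot E ` NConf E l 1)"
          unfolding NCConf0_def by auto
        have "x \<in> closure (Annot E ` NConf E l \<epsilon>)" by (rule key[OF a(2) a(1) e fin])
        then show "x \<in> ({C. is_config E l C} \<times> UNIV) \<inter> closure (Annot E ` NConf E l \<epsilon>)"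
          using a(1) by (cases x) auto
      qed
    qed
  qed
qed

end
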